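(* Consider the cone percolation process on $\mathbb{T}_d^+$ ($d\ge 2$) with radius of influence distributed as $R$, where $p_0=\mathbb{P}(R=0)\in(0,1)$. (I) If $\mathbb{E}(d^R) > 1 + p_0$ (including the case $\mathbb{E}(d^R)=\infty$), then $\mathbb{P}_+[V] > 0$. (II) If $\mathbb{E}(d^R) \le 2 - \frac{1}{d}$, then $\mathbb{P}_+[V] = 0$.
   Context: Let $d\ge 2$ and let $\mathbb{T}_d$ be the infinite tree in which every vertex has exactly $d+1$ neighbours. Fix a vertex $\mathcal{O}$ (the origin); $d(u,v)$ denotes graph distance. Write $u\le v$ if $u$ lies on the path from $\mathcal{O}$ to $v$ (so $\mathcal{O}\le v$ for all $v$). Fix a neighbour $w$ of $\mathcal{O}$ and let $\mathbb{T}_d^+$ be the subtree obtained by deleting all vertices $x$ with $w\le x$; in $\mathbb{T}_d^+$ every vertex $u$ has exactly $d$ neighbours $x$ with $u\le x$ (its children). Let $R$ be a random variable with values in $\{0,1,2,\dots\}$, $p_k=\mathbb{P}(R=k)$, and assume $p_0\in(0,1)$. Cone percolation on $G\in\{\mathbb{T}_d,\mathbb{T}_d^+\}$: to each vertex $u$ of $G$ attach an independent copy $R_u$ of $R$; let $B_u=\{v\in G: u\le v,\ d(u,v)\le R_u\}$; set $I_0=\{\mathcal{O}\}$, $I_{n+1}=\bigcup_{u\in I_n}B_u$ for $n\ge0$, $I=\bigcup_{n\ge0}I_n$, and let $V$ be the event $\{|I|=\infty\}$ (survival). $\mathbb{P}_+$ and $\mathbb{P}$ denote the probability measures of the process on $\mathbb{T}_d^+$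 and on $\mathbb{T}_d$ respectively. *)

theory Defs
  imports "HOL-Probability.Probability" "HOL-Library.Sublist"
begin

text \<open>The rooted tree T_d^+ : vertices are finite words over the alphabet {0..<d};
  the origin is the empty word, the children of u are u @ [i] for i < d.
  u \<le> v (u on the path from the origin to v) is the prefix relation, and for
  prefix u v the graph distance d(u,v) equals length v - length u.\<close>

definition verts :: "nat \<Rightarrow> nat list set" where
  "verts d = {xs. \<forall>x\<in>set xs. x < d}"

text \<open>B_u = {v : u \<le> v, d(u,v) \<le> R_u}, where \<omega> u plays the role of R_u.\<close>
definition cone :: "nat \<Rightarrow> (nat list \<Rightarrow> nat) \<Rightarrow> nat list \<Rightarrow> nat list set" where
  "cone d \<omega> u = {v \<in> verts d. prefix u v \<and> length v - length u \<le> \<omega> u}"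

fun infected :: "nat \<Rightarrow> (nat list \<Rightarrow> nat) \<Rightarrow> nat \<Rightarrow> nat list set" where
  "infected d \<omega> 0 = {[]}"
| "infected d \<omega> (Suc n) = (\<Union>u\<in>infected d \<omega> n. cone d \<omega> u)"

definition infected_all :: "nat \<Rightarrow> (nat list \<Rightarrow> nat) \<Rightarrow> nat list set" where
  "infected_all d \<omega> = (\<Union>n. infected d \<omega> n)"

definition cone_space :: "nat \<Rightarrow> nat pmf \<Rightarrow> (nat list \<Rightarrow> nat) measure" where
  "cone_space d p = (\<Pi>\<^sub>M u\<in>verts d. measure_pmf p)"

definition survival :: "nat \<Rightarrow> nat pmf \<Rightarrow> (nat list \<Rightarrow> nat) set" where
  "survival d p = {\<omega> \<in> space (cone_space d p). infinite (infected_all d \<omega>)}"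

end

theory Submission
  imports Defs
begin


definition shift :: "(nat list \<Rightarrow> nat) \<Rightarrow> nat \<Rightarrow> nat list \<Rightarrow> nat" where
  "shift \<omega> i = (\<lambda>v. \<omega> (i # v))"

fun pw :: "(nat list \<Rightarrow> nat) \<Rightarrow> nat \<Rightarrow> nat list \<Rightarrow> nat" where
  "pw \<omega> m [] = max m (\<omega> [])"
| "pw \<omega> m (i # w) = pw (shift \<omega> i) (max m (\<omega> []) - 1) w"

fun infv :: "nat \<Rightarrow> (nat list \<Rightarrow> nat) \<Rightarrow> nat \<Rightarrow> nat list \<Rightarrow> bool" where
  "infv d \<omega> m [] = True"
| "infv d \<omega> m (i # w) = (i < d \<and> 0 < max m (\<omega> []) \<and> infv d (shift \<omega> i) (max m (\<omega> []) - 1) w)"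

fun alive :: "nat \<Rightarrow> (nat list \<Rightarrow> nat) \<Rightarrow> nat \<Rightarrow> nat \<Rightarrow> bool" where
  "alive d \<omega> m 0 = True"
| "alive d \<omega> m (Suc n) = (0 < max m (\<omega> []) \<and> (\<exists>i<d. alive d (shift \<omega> i) (max m (\<omega> []) - 1) n))"

lemma alive_iff: "alive d \<omega> m n \<longleftrightarrow> (\<exists>w. length w = n \<and> infv d \<omega> m w)"
proof (induction n arbitrary: \<omega> m)
  case 0 then show ?case by auto
next
  case (Suc n)
  show ?case
  proof
    assume "alive d \<omega> m (Suc n)"
    then obtain i where "i < d" "0 < max m (\<omega> [])" "alive d (shift \<omega> i) (max m (\<omega> []) - 1) n" by auto
    with Suc obtain w where "length w = n" "infv d (shift \<omega> i) (max m (\<omega> []) - 1) w" by blast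
    then show "\<exists>w. length w = Suc n \<and> infv d \<omega> m w"
      using \<open>i<d\<close> \<open>0 < max m (\<omega> [])\<close> by (intro exI[of _ "i # w"]) auto
  next
    assume "\<exists>w. length w = Suc n \<and> infv d \<omega> m w"
    then obtain w where w: "length w = Suc n" "infv d \<omega> m w" by blast
    then obtain i w' where "w = i # w'" by (cases w) auto
    with w Suc show "alive d \<omega> m (Suc n)" by auto
  qed
qed

lemma infv_snoc:
  "infv d \<omega> m (u @ [i]) \<longleftrightarrow> infv d \<omega> m u \<and> i < d \<and> 0 < pw \<omega> m u"
proof (induction u arbitrary: \<omega> m)
  case Nil then show ?case by simp
next
  case (Cons j u) then show ?case by auto
qed

lemma pw_snoc:
  "pw \<omega> m (u @ [i]) = max (pw \<omega> m u - 1) (\<omega> (u @ [i]))"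
proof (induction u arbitrary: \<omega> m)
  case Nil then show ?case by (simp add: shift_def)
next
  case (Cons j u) then show ?case by (simp add: shift_def)
qed

lemma pw_ge: "\<omega> u \<le> pw \<omega> m u"
proof (induction u rule: rev_induct)
  case Nil then show ?case by simp
next
  case (snoc i u) then show ?case by (simp add: pw_snoc)
qed

lemma infv_verts: "infv d \<omega> m w \<Longrightarrow> w \<in> verts d"
proof (induction w rule: rev_induct)
  case Nil then show ?case by (simp add: verts_def)
next
  case (snoc i u) then show ?case by (auto simp add: infv_snoc verts_def)
qed

lemma infv_take: "infv d \<omega> m w \<Longrightarrow> infv d \<omega> m (take k w)"
proof (induction w arbitrary: \<omega> m k)
  case Nil then show ?case by simp
next
  case (Cons i w) then show ?case by (cases k) auto
qed

lemma infected_verts: "infected d \<omega> n \<subseteq> verts d"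
  by (cases n) (auto simp: cone_def verts_def)

lemma cone_ext:
  assumes "infv d \<omega> 0 u" "w \<noteq> [] \<longrightarrow> u @ w \<in> verts d" "length w \<le> k" "k \<le> pw \<omega> 0 u"
  shows "infv d \<omega> 0 (u @ w) \<and> k \<le> pw \<omega> 0 (u @ w) + length w"
  using assms(2,3)
proof (induction w rule: rev_induct)
  case Nil then show ?case using assms by simp
next
  case (snoc i w)
  have "w \<noteq> [] \<longrightarrow> u @ w \<in> verts d" using snoc.prems by (auto simp: verts_def)
  with snoc have IH: "infv d \<omega> 0 (u @ w)" "k \<le> pw \<omega> 0 (u @ w) + length w" by auto
  have "i < d" using snoc.prems by (auto simp: verts_def)
  moreover have "0 < pw \<omega> 0 (u @ w)" using IH snoc.prems by simp
  ultimately have "infv d \<omega> 0 ((u @ w) @ [i])" using IH by (simp add: infv_snoc del: append_assoc)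
  moreover have "pw \<omega> 0 ((u @ w) @ [i]) \<ge> pw \<omega> 0 (u @ w) - 1" by (simp add: pw_snoc del: append_assoc)
  ultimately show ?case using IH \<open>0 < pw \<omega> 0 (u @ w)\<close> by simp
qed

lemma infected_infv: "v \<in> infected d \<omega> n \<Longrightarrow> infv d \<omega> 0 v"
proof (induction n arbitrary: v)
  case 0 then show ?case by simp
next
  case (Suc n)
  then obtain u where u: "u \<in> infected d \<omega> n" "v \<in> cone d \<omega> u" by auto
  then obtain w where w: "v = u @ w" "v \<in> verts d" "length w \<le> \<omega> u"
    by (auto simp: cone_def prefix_def)
  have "infv d \<omega> 0 u" using Suc.IH u by auto
  then show ?case using cone_ext[of d \<omega> u w "\<omega> u"] w pw_ge[of \<omega> u 0] by auto
qed

lemma infv_infected: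
  "infv d \<omega> 0 v \<Longrightarrow> v \<in> infected_all d \<omega> \<and>
     (\<exists>a. prefix a v \<and> a \<in> infected_all d \<omega> \<and> length v - length a + pw \<omega> 0 v \<le> \<omega> a)"
proof (induction v rule: rev_induct)
  case Nil
  have "[] \<in> infected_all d \<omega>" unfolding infected_all_def by (auto intro: exI[of _ 0])
  then show ?case by auto
next
  case (snoc i v)
  have hv: "infv d \<omega> 0 v" "i < d" "0 < pw \<omega> 0 v" using snoc.prems by (auto simp: infv_snoc)
  then obtain a where a: "prefix a v" "a \<in> infected_all d \<omega>" "length v - length a + pw \<omega> 0 v \<le> \<omega> a"
    using snoc.IH by blast
  from a(2) obtain k where k: "a \<in> infected d \<omega> k" unfolding infected_all_def by auto
  have la: "length a \<le> length v" using a(1) by (simp add: prefix_length_le)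
  have "v @ [i] \<in> verts d" using infv_verts[OF snoc.prems] .
  moreover have "prefix a (v @ [i])" using a(1) by (simp add: prefix_snoc)
  ultimately have "v @ [i] \<in> cone d \<omega> a" using a(3) hv(3) la by (auto simp: cone_def)
  then have "v @ [i] \<in> infected d \<omega> (Suc k)" using k by auto
  then have inf: "v @ [i] \<in> infected_all d \<omega>" unfolding infected_all_def UN_iff by blast
  show ?case
  proof (cases "\<omega> (v @ [i]) \<le> pw \<omega> 0 v - 1")
    case True
    then have "pw \<omega> 0 (v @ [i]) = pw \<omega> 0 v - 1" by (simp add: pw_snoc)
    then have "length (v @ [i]) - length a + pw \<omega> 0 (v @ [i]) \<le> \<omega> a"
      using a(3) la hv(3) by simp
    then show ?thesis using inf a(2) \<open>prefix a (v @ [i])\<close> by blast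
  next
    case False
    then have "pw \<omega> 0 (v @ [i]) = \<omega> (v @ [i])" by (simp add: pw_snoc)
    then have "length (v @ [i]) - length (v @ [i]) + pw \<omega> 0 (v @ [i]) \<le> \<omega> (v @ [i])" by simp
    moreover have "prefix (v @ [i]) (v @ [i])" by simp
    ultimately show ?thesis using inf by blast
  qed
qed

lemma infected_all_iff: "v \<in> infected_all d \<omega> \<longleftrightarrow> infv d \<omega> 0 v"
proof
  assume "v \<in> infected_all d \<omega>"
  then obtain n where "v \<in> infected d \<omega> n" unfolding infected_all_def by auto
  then show "infv d \<omega> 0 v" by (rule infected_infv)
next
  assume "infv d \<omega> 0 v"
  then show "v \<in> infected_all d \<omega>" using infv_infected by blast
qed

lemma infinite_iff_alive: "infinite (infected_all d \<omega>) \<longleftrightarrow> (\<forall>n. alive d \<omega> 0 n)"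
proof
  assume inf: "infinite (infected_all d \<omega>)"
  show "\<forall>n. alive d \<omega> 0 n"
  proof (rule ccontr)
    assume "\<not> (\<forall>n. alive d \<omega> 0 n)"
    then obtain n where n: "\<not> alive d \<omega> 0 n" by auto
    have "infected_all d \<omega> \<subseteq> {xs. set xs \<subseteq> {..<d} \<and> length xs \<le> n}"
    proof
      fix v assume v: "v \<in> infected_all d \<omega>"
      then have iv: "infv d \<omega> 0 v" by (simp add: infected_all_iff)
      have "length v \<le> n"
      proof (rule ccontr)
        assume "\<not> length v \<le> n"
        then have "length (take n v) = n" by simp
        moreover have "infv d \<omega> 0 (take n v)" using infv_take[OF iv] .
        ultimately show False using n alive_iff by blast
      qed
      moreover have "set v \<subseteq> {..<d}" using infv_verts[OF iv] by (auto simp: verts_def)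
      ultimately show "v \<in> {xs. set xs \<subseteq> {..<d} \<and> length xs \<le> n}" by auto
    qed
    moreover have "finite {xs. set xs \<subseteq> {..<d} \<and> length xs \<le> n}"
      by (rule finite_lists_length_le) simp
    ultimately show False using inf finite_subset by blast
  qed
next
  assume al: "\<forall>n. alive d \<omega> 0 n"
  show "infinite (infected_all d \<omega>)"
  proof
    assume fin: "finite (infected_all d \<omega>)"
    have "UNIV \<subseteq> length ` infected_all d \<omega>"
    proof
      fix n :: nat
      obtain w where "length w = n" "infv d \<omega> 0 w" using al alive_iff by blast
      then show "n \<in> length ` infected_all d \<omega>" by (auto simp: infected_all_iff)
    qed
    then show False using finite_subset[OF _ finite_imageI[OF fin]] by auto
  qed
qed


definition J :: "nat \<Rightarrow> nat \<Rightarrow> nat list set" where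
  "J d n = {v \<in> verts d. length v < n}"

lemma finite_J: "finite (J d n)"
proof -
  have "J d n \<subseteq> {xs. set xs \<subseteq> {..<d} \<and> length xs \<le> n}" by (auto simp: J_def verts_def)
  moreover have "finite {xs. set xs \<subseteq> {..<d} \<and> length xs \<le> n}"
    by (rule finite_lists_length_le) simp
  ultimately show ?thesis by (rule finite_subset)
qed

lemma J_subset: "J d n \<subseteq> verts d" by (auto simp: J_def)

lemma alive_agree:
  "(\<forall>v\<in>J d n. \<omega> v = \<omega>' v) \<Longrightarrow> alive d \<omega> m n = alive d \<omega>' m n"
proof (induction n arbitrary: \<omega> \<omega>' m)
  case 0 then show ?case by simp
next
  case (Suc n)
  have e: "\<omega> [] = \<omega>' []" using Suc.prems by (auto simp: J_def verts_def)
  have "\<forall>v\<in>J d n. shift \<omega> i v = shift \<omega>' i v" if "i < d" for i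
    using Suc.prems that by (auto simp: J_def verts_def shift_def)
  then have "alive d (shift \<omega> i) k n = alive d (shift \<omega>' i) k n" if "i < d" for i k
    using Suc.IH that by blast
  then have "(\<exists>i<d. alive d (shift \<omega> i) k n) = (\<exists>i<d. alive d (shift \<omega>' i) k n)" for k by blast
  then show ?case using e by simp
qed

lemma alive_Suc: "alive d \<omega> m (Suc n) \<Longrightarrow> alive d \<omega> m n"
proof -
  assume "alive d \<omega> m (Suc n)"
  then obtain w where "length w = Suc n" "infv d \<omega> m w" using alive_iff by blast
  then have "length (take n w) = n" "infv d \<omega> m (take n w)" using infv_take by auto
  then show ?thesis using alive_iff by blast
qed

definition glue :: "nat \<Rightarrow> nat \<Rightarrow> (nat \<Rightarrow> nat list \<Rightarrow> nat) \<Rightarrow> nat list \<Rightarrow> nat" where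
  "glue d r fs = (\<lambda>v. case v of [] \<Rightarrow> r | i # w \<Rightarrow> if i < d then fs i w else 0)"

fun T :: "nat \<Rightarrow> nat pmf \<Rightarrow> nat \<Rightarrow> (nat list \<Rightarrow> nat) pmf" where
  "T d p 0 = return_pmf (\<lambda>_. 0)"
| "T d p (Suc n) = map_pmf (\<lambda>(r, fs). glue d r fs) (pair_pmf p (Pi_pmf {..<d} (\<lambda>_. 0) (\<lambda>_. T d p n)))"

lemma J_Suc: "J d (Suc n) = insert [] (\<Union>i\<in>{..<d}. (#) i ` J d n)"
proof (rule set_eqI)
  fix v show "v \<in> J d (Suc n) \<longleftrightarrow> v \<in> insert [] (\<Union>i\<in>{..<d}. (#) i ` J d n)"
    by (cases v) (auto simp: J_def verts_def)
qed

lemma T_eq: "T d p n = Pi_pmf (J d n) 0 (\<lambda>_. p)"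
proof (induction n)
  case 0
  have "J d 0 = {}" by (simp add: J_def)
  then show ?case by simp
next
  case (Suc n)
  define N where "N = Pi_pmf {..<d} (\<lambda>_. 0) (\<lambda>_. T d p n)"
  define g where "g = (\<lambda>(r::nat, fs). glue d r fs)"
  have TS: "T d p (Suc n) = map_pmf g (pair_pmf p N)" by (simp add: N_def g_def)
  have supT: "\<forall>x. x \<notin> J d n \<longrightarrow> h x = 0" if "h \<in> set_pmf (T d p n)" for h
    using that set_Pi_pmf_subset[OF finite_J, where dflt=0 and p="\<lambda>_. p"] Suc.IH by auto
  show ?case
  proof (rule pmf_eqI)
    fix f :: "nat list \<Rightarrow> nat"
    show "pmf (T d p (Suc n)) f = pmf (Pi_pmf (J d (Suc n)) 0 (\<lambda>_. p)) f"
    proof (cases "\<forall>v. v \<notin> J d (Suc n) \<longrightarrow> f v = 0")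
      case good: True
      define fs0 where "fs0 = (\<lambda>i. if i < d then shift f i else (\<lambda>_. 0))"
      have gf: "g (f [], fs0) = f"
      proof
        fix v show "g (f [], fs0) v = f v"
        proof (cases v)
          case Nil then show ?thesis by (simp add: g_def glue_def)
        next
          case (Cons i w)
          show ?thesis
          proof (cases "i < d")
            case True then show ?thesis using Cons by (simp add: g_def glue_def fs0_def shift_def)
          next
            case False
            then have "v \<notin> J d (Suc n)" using Cons by (auto simp: J_def verts_def)
            then show ?thesis using good False Cons by (simp add: g_def glue_def fs0_def)
          qed
        qed
      qed
      have "pmf (T d p (Suc n)) f = measure (pair_pmf p N) (g -` {f})"
        unfolding TS by (rule pmf_map)
      also have "\<dots> = measure (pair_pmf p N) {(f [], fs0)}"
      proof (rule measure_prob_cong_0)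
        fix x assume x: "x \<in> g -` {f} - {(f [], fs0)}"
        obtain r fs where xe: "x = (r, fs)" by (cases x)
        show "pmf (pair_pmf p N) x = 0"
        proof (cases "\<exists>i. i \<notin> {..<d} \<and> fs i \<noteq> (\<lambda>_. 0)")
          case True
          then have "pmf N fs = 0" unfolding N_def by (intro pmf_Pi_outside) auto
          then show ?thesis by (simp add: xe pmf_pair)
        next
          case False
          have gx: "glue d r fs = f" using x xe by (simp add: g_def)
          have "r = f []" using gx by (auto simp: glue_def)
          moreover have "fs = fs0"
          proof
            fix i show "fs i = fs0 i"
            proof (cases "i < d")
              case True
              show ?thesis
              proof
                fix w have "f (i # w) = fs i w" using gx True by (auto simp: glue_def)
                then show "fs i w = fs0 i w" using True by (simp add: fs0_def shift_def)
              qed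
            next
              case False then show ?thesis using \<open>\<not> (\<exists>i. i \<notin> {..<d} \<and> fs i \<noteq> (\<lambda>_. 0))\<close>
                by (auto simp: fs0_def)
            qed
          qed
          ultimately show ?thesis using x xe by simp
        qed
      next
        fix x assume "x \<in> {(f [], fs0)} - g -` {f}"
        then show "pmf (pair_pmf p N) x = 0" using gf by simp
      qed
      also have "\<dots> = pmf p (f []) * pmf N fs0"
        by (simp add: measure_pmf_single pmf_pair)
      also have "pmf N fs0 = (\<Prod>i\<in>{..<d}. pmf (T d p n) (fs0 i))"
        unfolding N_def by (subst pmf_Pi) (auto simp: fs0_def)
      also have "\<dots> = (\<Prod>i\<in>{..<d}. \<Prod>w\<in>J d n. pmf p (f (i # w)))"
      proof (rule prod.cong[OF refl])
        fix i assume i: "i \<in> {..<d}"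
        have "\<forall>w. w \<notin> J d n \<longrightarrow> fs0 i w = 0"
        proof (intro allI impI)
          fix w assume "w \<notin> J d n"
          then have "i # w \<notin> J d (Suc n)" using i by (auto simp: J_def verts_def)
          then show "fs0 i w = 0" using good i by (simp add: fs0_def shift_def)
        qed
        then show "pmf (T d p n) (fs0 i) = (\<Prod>w\<in>J d n. pmf p (f (i # w)))"
          unfolding Suc.IH using i by (subst pmf_Pi[OF finite_J]) (auto simp: fs0_def shift_def)
      qed
      also have "pmf p (f []) * \<dots> = (\<Prod>v\<in>J d (Suc n). pmf p (f v))"
      proof -
        have disj: "[] \<notin> (\<Union>i\<in>{..<d}. (#) i ` J d n)" by auto
        have "(\<Prod>v\<in>(\<Union>i\<in>{..<d}. (#) i ` J d n). pmf p (f v))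
              = (\<Prod>i\<in>{..<d}. \<Prod>v\<in>(#) i ` J d n. pmf p (f v))"
          by (rule prod.UNION_disjoint) (auto simp: finite_J)
        also have "\<dots> = (\<Prod>i\<in>{..<d}. \<Prod>w\<in>J d n. pmf p (f (i # w)))"
          by (rule prod.cong[OF refl]) (simp add: prod.reindex)
        finally show ?thesis unfolding J_Suc
          by (subst prod.insert) (auto simp: finite_J)
      qed
      also have "\<dots> = pmf (Pi_pmf (J d (Suc n)) 0 (\<lambda>_. p)) f"
        using good by (subst pmf_Pi[OF finite_J]) auto
      finally show ?thesis .
    next
      case bad: False
      have "f \<notin> set_pmf (T d p (Suc n))"
      proof
        assume "f \<in> set_pmf (T d p (Suc n))"
        then obtain r fs where rfs: "fs \<in> set_pmf N" "f = glue d r fs"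
          unfolding TS by (auto simp: g_def)
        have fsi: "fs i \<in> set_pmf (T d p n)" if "i < d" for i
          using rfs(1) that unfolding N_def by (auto simp: set_Pi_pmf PiE_dflt_def)
        have "\<forall>v. v \<notin> J d (Suc n) \<longrightarrow> f v = 0"
        proof (intro allI impI)
          fix v assume v: "v \<notin> J d (Suc n)"
          show "f v = 0"
          proof (cases v)
            case Nil then show ?thesis using v by (simp add: J_def verts_def)
          next
            case (Cons i w)
            show ?thesis
            proof (cases "i < d")
              case True
              then have "w \<notin> J d n" using v Cons by (auto simp: J_def verts_def)
              then show ?thesis using supT[OF fsi[OF True]] rfs(2) Cons True by (simp add: glue_def)
            next
              case False then show ?thesis using rfs(2) Cons by (simp add: glue_def)
            qed
          qed
        qed
        then show False using bad by blast
      qed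
      then have "pmf (T d p (Suc n)) f = 0" by (simp add: pmf_eq_0_set_pmf)
      also have "\<dots> = pmf (Pi_pmf (J d (Suc n)) 0 (\<lambda>_. p)) f"
        using bad by (subst pmf_Pi_outside[OF finite_J]) auto
      finally show ?thesis .
    qed
  qed
qed


fun Q :: "nat \<Rightarrow> nat pmf \<Rightarrow> nat \<Rightarrow> nat \<Rightarrow> real" where
  "Q d p 0 m = 1"
| "Q d p (Suc n) m = (\<integral>r. (if max m r = 0 then 0 else 1 - (1 - Q d p n (max m r - 1)) ^ d) \<partial>measure_pmf p)"

lemma prob_compl_pmf: "measure (measure_pmf M) (UNIV - A) = 1 - measure (measure_pmf M) A"
  using measure_pmf.prob_compl[where M=M and A=A] by simp

lemma measure_pair_pmf:
  "measure (pair_pmf A B) X = (\<integral>a. measure (measure_pmf B) {b. (a, b) \<in> X} \<partial>measure_pmf A)"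
proof -
  have "emeasure (pair_pmf A B) X = (\<integral>\<^sup>+a. emeasure (measure_pmf B) {b. (a, b) \<in> X} \<partial>measure_pmf A)"
  proof -
    have "emeasure (pair_pmf A B) X = (\<integral>\<^sup>+x. indicator X x \<partial>pair_pmf A B)" by simp
    also have "\<dots> = (\<integral>\<^sup>+a. \<integral>\<^sup>+b. indicator X (a, b) \<partial>B \<partial>A)" by (rule nn_integral_pair_pmf')
    also have "\<dots> = (\<integral>\<^sup>+a. emeasure (measure_pmf B) {b. (a, b) \<in> X} \<partial>measure_pmf A)"
    proof (rule nn_integral_cong)
      fix a
      have "(\<lambda>b. indicator X (a, b) :: ennreal) = indicator {b. (a, b) \<in> X}"
        by (auto simp: indicator_def)
      then show "(\<integral>\<^sup>+b. indicator X (a, b) \<partial>B) = emeasure (measure_pmf B) {b. (a, b) \<in> X}" by simp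
    qed
    finally show ?thesis .
  qed
  also have "\<dots> = (\<integral>\<^sup>+a. ennreal (measure (measure_pmf B) {b. (a, b) \<in> X}) \<partial>measure_pmf A)"
    by (simp add: measure_pmf.emeasure_eq_measure)
  also have "\<dots> = ennreal (\<integral>a. measure (measure_pmf B) {b. (a, b) \<in> X} \<partial>measure_pmf A)"
    by (rule nn_integral_eq_integral)
       (auto intro!: measure_pmf.integrable_const_bound[where B=1])
  finally show ?thesis
    by (simp add: measure_pmf.emeasure_eq_measure integral_nonneg_AE)
qed

lemma Q_bounds: "0 \<le> Q d p n m \<and> Q d p n m \<le> 1"
proof (induction n arbitrary: m)
  case 0 then show ?case by simp
next
  case (Suc n)
  have b: "0 \<le> (if max m r = 0 then 0 else 1 - (1 - Q d p n (max m r - 1)) ^ d) \<and>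
           (if max m r = 0 then 0 else 1 - (1 - Q d p n (max m r - 1)) ^ d) \<le> (1::real)" for r
  proof -
    have "0 \<le> 1 - Q d p n (max m r - 1)" "1 - Q d p n (max m r - 1) \<le> 1" using Suc.IH by auto
    then have "0 \<le> (1 - Q d p n (max m r - 1)) ^ d" "(1 - Q d p n (max m r - 1)) ^ d \<le> 1"
      by (auto intro: power_le_one)
    then show ?thesis by auto
  qed
  have "0 \<le> Q d p (Suc n) m" unfolding Q.simps using b by (intro integral_nonneg_AE) auto
  moreover have "Q d p (Suc n) m \<le> (\<integral>r. 1 \<partial>measure_pmf p)" unfolding Q.simps using b
    by (intro integral_mono measure_pmf.integrable_const_bound[where B=1]) auto
  ultimately show ?case by simp
qed

lemma prob_T: "measure (measure_pmf (T d p n)) {f. alive d f m n} = Q d p n m"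
proof (induction n arbitrary: m)
  case 0 then show ?case by simp
next
  case (Suc n)
  define N where "N = Pi_pmf {..<d} (\<lambda>_. 0) (\<lambda>_. T d p n)"
  have sh: "shift (glue d r fs) i = fs i" if "i < d" for r fs i
    using that by (auto simp: shift_def glue_def)
  have pre: "(\<lambda>(r, fs). glue d r fs) -` {f. alive d f m (Suc n)}
     = {(r, fs). 0 < max m r \<and> (\<exists>i<d. alive d (fs i) (max m r - 1) n)}"
  proof (rule set_eqI)
    fix x :: "nat \<times> (nat \<Rightarrow> nat list \<Rightarrow> nat)"
    obtain r fs where x: "x = (r, fs)" by (cases x)
    have g0: "glue d r fs [] = r" by (simp add: glue_def)
    have "(\<exists>i<d. alive d (shift (glue d r fs) i) k n) = (\<exists>i<d. alive d (fs i) k n)" for k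
      using sh by metis
    then show "x \<in> (\<lambda>(r, fs). glue d r fs) -` {f. alive d f m (Suc n)} \<longleftrightarrow>
      x \<in> {(r, fs). 0 < max m r \<and> (\<exists>i<d. alive d (fs i) (max m r - 1) n)}"
      using x g0 by simp
  qed
  have inner: "measure (measure_pmf N) {fs. 0 < max m r \<and> (\<exists>i<d. alive d (fs i) (max m r - 1) n)}
      = (if max m r = 0 then 0 else 1 - (1 - Q d p n (max m r - 1)) ^ d)" for r
  proof (cases "max m r = 0")
    case True then show ?thesis by simp
  next
    case False
    let ?k = "max m r - 1"
    have "{fs. 0 < max m r \<and> (\<exists>i<d. alive d (fs i) ?k n)} = UNIV - Pi {..<d} (\<lambda>_. {g. \<not> alive d g ?k n})"
      using False by auto
    then have "measure (measure_pmf N) {fs. 0 < max m r \<and> (\<exists>i<d. alive d (fs i) ?k n)}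
        = 1 - measure (measure_pmf N) (Pi {..<d} (\<lambda>_. {g. \<not> alive d g ?k n}))"
      by (simp add: prob_compl_pmf)
    also have "measure (measure_pmf N) (Pi {..<d} (\<lambda>_. {g. \<not> alive d g ?k n}))
        = (\<Prod>i\<in>{..<d}. measure (measure_pmf (T d p n)) {g. \<not> alive d g ?k n})"
      unfolding N_def by (rule measure_Pi_pmf_Pi) simp
    also have "measure (measure_pmf (T d p n)) {g. \<not> alive d g ?k n} = 1 - Q d p n ?k"
    proof -
      have "{g. \<not> alive d g ?k n} = UNIV - {g. alive d g ?k n}" by auto
      then show ?thesis using Suc.IH by (simp add: prob_compl_pmf)
    qed
    finally have R: "measure (measure_pmf N) {fs. 0 < max m r \<and> (\<exists>i<d. alive d (fs i) ?k n)}
       = 1 - (1 - Q d p n ?k) ^ d" by simp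
    show ?thesis by (simp only: R if_not_P[OF False])
  qed
  have "measure (measure_pmf (T d p (Suc n))) {f. alive d f m (Suc n)}
      = measure (pair_pmf p N) {(r, fs). 0 < max m r \<and> (\<exists>i<d. alive d (fs i) (max m r - 1) n)}"
    unfolding T.simps measure_map_pmf pre N_def ..
  also have "\<dots> = (\<integral>r. measure (measure_pmf N) {fs. 0 < max m r \<and> (\<exists>i<d. alive d (fs i) (max m r - 1) n)} \<partial>measure_pmf p)"
    by (subst measure_pair_pmf) simp
  also have "\<dots> = Q d p (Suc n) m" unfolding Q.simps inner ..
  finally show ?case .
qed


lemma pps: "product_prob_space (\<lambda>_::nat list. measure_pmf (p::nat pmf))"
  by (rule product_prob_spaceI) (rule measure_pmf.prob_space_axioms)

lemma distr_Pi_pmf: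
  fixes p :: "nat pmf" and K :: "nat list set"
  assumes fin: "finite K"
  shows "distr (measure_pmf (Pi_pmf K 0 (\<lambda>_. p))) (PiM K (\<lambda>_. measure_pmf p)) (\<lambda>x. restrict x K)
       = PiM K (\<lambda>_. measure_pmf p)"
proof -
  interpret P: product_prob_space "\<lambda>_::nat list. measure_pmf p" K by (rule pps)
  show ?thesis
  proof (rule P.PiM_eqI)
    fix A assume A: "\<And>i. i \<in> K \<Longrightarrow> A i \<in> sets (measure_pmf p)"
    have "Pi\<^sub>E K A \<in> sets (PiM K (\<lambda>_. measure_pmf p))"
      using fin by (intro sets_PiM_I_finite) auto
    then have "emeasure (distr (measure_pmf (Pi_pmf K 0 (\<lambda>_. p))) (PiM K (\<lambda>_. measure_pmf p)) (\<lambda>x. restrict x K)) (Pi\<^sub>E K A)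
        = emeasure (measure_pmf (Pi_pmf K 0 (\<lambda>_. p))) ((\<lambda>x. restrict x K) -` Pi\<^sub>E K A)"
      by (subst emeasure_distr) (auto simp: space_PiM)
    also have "\<dots> = emeasure (measure_pmf (Pi_pmf K 0 (\<lambda>_. p))) (PiE_dflt K 0 A)"
      by (intro emeasure_eq_AE AE_pmfI) (auto simp: PiE_dflt_def set_Pi_pmf fin)
    also have "\<dots> = (\<Prod>i\<in>K. emeasure (measure_pmf p) (A i))"
      by (simp add: measure_pmf.emeasure_eq_measure measure_Pi_pmf_PiE_dflt fin prod_ennreal)
    finally show "emeasure (distr (measure_pmf (Pi_pmf K 0 (\<lambda>_. p))) (PiM K (\<lambda>_. measure_pmf p)) (\<lambda>x. restrict x K)) (Pi\<^sub>E K A)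
        = (\<Prod>i\<in>K. emeasure (measure_pmf p) (A i))" .
  qed (simp_all add: fin)
qed

lemma sets_PiM_countable:
  fixes K :: "nat list set" and p :: "nat pmf"
  assumes fin: "finite K" and X: "X \<subseteq> PiE K (\<lambda>_. UNIV)"
  shows "X \<in> sets (PiM K (\<lambda>_. measure_pmf p))"
proof -
  have "X = (\<Union>g\<in>X. PiE K (\<lambda>j. {g j}))"
  proof
    show "X \<subseteq> (\<Union>g\<in>X. PiE K (\<lambda>j. {g j}))"
      using X by (auto simp: PiE_def Pi_def)
    show "(\<Union>g\<in>X. PiE K (\<lambda>j. {g j})) \<subseteq> X"
    proof
      fix h assume "h \<in> (\<Union>g\<in>X. PiE K (\<lambda>j. {g j}))"
      then obtain g where g: "g \<in> X" "h \<in> PiE K (\<lambda>j. {g j})" by auto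
      have "g \<in> PiE K (\<lambda>_. UNIV)" using g(1) X by auto
      have "h = g"
      proof
        fix x show "h x = g x" using g(2) \<open>g \<in> PiE K (\<lambda>_. UNIV)\<close>
          by (cases "x \<in> K") (auto simp: PiE_def extensional_def)
      qed
      then show "h \<in> X" using g by simp
    qed
  qed
  also have "\<dots> \<in> sets (PiM K (\<lambda>_. measure_pmf p))"
    by (rule sets.countable_UN')
       (use countable_subset[OF X countable_PiE[OF fin]] fin in \<open>auto intro!: sets_PiM_I_finite\<close>)
  finally show ?thesis .
qed

definition E :: "nat \<Rightarrow> nat pmf \<Rightarrow> nat \<Rightarrow> (nat list \<Rightarrow> nat) set" where
  "E d p n = {\<omega> \<in> space (cone_space d p). alive d \<omega> 0 n}"

lemma E_sets_measure:
  "E d p n \<in> sets (cone_space d p) \<and> measure (cone_space d p) (E d p n) = Q d p n 0"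
proof -
  let ?I = "verts d" and ?M = "\<lambda>_::nat list. measure_pmf p" and ?K = "J d n"
  interpret P: product_prob_space ?M ?I by (rule pps)
  define X where "X = {g \<in> PiE ?K (\<lambda>_. UNIV). alive d g 0 n}"
  have agr: "alive d (restrict \<omega> ?K) 0 n = alive d \<omega> 0 n" for \<omega>
    by (rule alive_agree) auto
  have Eeq: "E d p n = prod_emb ?I ?M ?K X"
    unfolding E_def cone_space_def prod_emb_def X_def
    by (auto simp: space_PiM agr)
  have Xs: "X \<in> sets (PiM ?K ?M)"
    by (rule sets_PiM_countable) (auto simp: X_def finite_J)
  have "E d p n \<in> sets (cone_space d p)"
    unfolding Eeq cone_space_def using Xs J_subset by (rule measurable_prod_emb[rotated])
  moreover have "measure (cone_space d p) (E d p n) = Q d p n 0"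
  proof -
    have "emeasure (cone_space d p) (E d p n) = emeasure (PiM ?K ?M) X"
      unfolding Eeq cone_space_def using Xs J_subset finite_J by (intro P.emeasure_PiM_emb')
    also have "\<dots> = emeasure (distr (measure_pmf (Pi_pmf ?K 0 (\<lambda>_. p))) (PiM ?K ?M) (\<lambda>x. restrict x ?K)) X"
      by (simp add: distr_Pi_pmf finite_J)
    also have "\<dots> = emeasure (measure_pmf (Pi_pmf ?K 0 (\<lambda>_. p))) ((\<lambda>x. restrict x ?K) -` X)"
      using Xs by (subst emeasure_distr) (auto simp: space_PiM)
    also have "(\<lambda>x. restrict x ?K) -` X = {f. alive d f 0 n}"
      by (auto simp: X_def agr)
    also have "emeasure (measure_pmf (Pi_pmf ?K 0 (\<lambda>_. p))) {f. alive d f 0 n} = ennreal (Q d p n 0)"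
      using prob_T[of d p n 0] by (simp add: T_eq measure_pmf.emeasure_eq_measure)
    finally have "emeasure (cone_space d p) (E d p n) = ennreal (Q d p n 0)" .
    then show ?thesis using Q_bounds[of d p n 0] by (simp add: measure_def)
  qed
  ultimately show ?thesis by simp
qed

lemma prob_space_cone: "prob_space (cone_space d p)"
  unfolding cone_space_def by (rule prob_space_PiM) (rule measure_pmf.prob_space_axioms)

lemma survival_eq: "survival d p = (\<Inter>n. E d p n)"
  unfolding survival_def E_def by (auto simp: infinite_iff_alive)

lemma survival_sets: "survival d p \<in> sets (cone_space d p)"
  unfolding survival_eq using E_sets_measure by auto

lemma survival_le: "measure (cone_space d p) (survival d p) \<le> Q d p n 0"
proof -
  interpret prob_space "cone_space d p" by (rule prob_space_cone)
  have "survival d p \<subseteq> E d p n" unfolding survival_eq by auto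
  then have "measure (cone_space d p) (survival d p) \<le> measure (cone_space d p) (E d p n)"
    using E_sets_measure by (intro finite_measure_mono) auto
  then show ?thesis using E_sets_measure by simp
qed

lemma survival_lim: "(\<lambda>n. Q d p n 0) \<longlonglongrightarrow> measure (cone_space d p) (survival d p)"
proof -
  interpret prob_space "cone_space d p" by (rule prob_space_cone)
  have "(\<lambda>n. measure (cone_space d p) (E d p n)) \<longlonglongrightarrow> measure (cone_space d p) (\<Inter>n. E d p n)"
  proof (rule finite_Lim_measure_decseq)
    show "range (E d p) \<subseteq> sets (cone_space d p)" using E_sets_measure by auto
    show "decseq (E d p)"
      by (rule decseq_SucI) (auto simp: E_def simp del: alive.simps intro: alive_Suc)
  qed
  then show ?thesis using E_sets_measure by (simp add: survival_eq)
qed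


lemma int_bdd: "(\<And>r. \<bar>f r\<bar> \<le> B) \<Longrightarrow> integrable (measure_pmf p) (f :: 'a \<Rightarrow> real)"
  by (rule measure_pmf.integrable_const_bound[where B=B]) auto

lemma phi_mono:
  fixes x y :: real
  assumes "x \<le> y" "y \<le> 1"
  shows "1 - (1 - x) ^ d \<le> 1 - (1 - y) ^ d"
proof -
  have "(1 - y) ^ d \<le> (1 - x) ^ d" using assms by (intro power_mono) auto
  then show ?thesis by simp
qed

lemma phi_bounds:
  fixes x :: real
  assumes "0 \<le> x" "x \<le> 1"
  shows "0 \<le> 1 - (1 - x) ^ d \<and> 1 - (1 - x) ^ d \<le> 1"
proof -
  have "0 \<le> (1 - x) ^ d" "(1 - x) ^ d \<le> 1" using assms by (auto intro: power_le_one)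
  then show ?thesis by simp
qed

lemma pow_lower:
  fixes x :: real
  assumes "0 \<le> x" "x \<le> 1" "1 \<le> d"
  shows "1 - real d * x + (real d - 1) * x^2 \<le> (1 - x) ^ d"
  using assms(3)
proof (induction d rule: dec_induct)
  case base then show ?case by simp
next
  case (step k)
  have "(1 - x) ^ Suc k = (1 - x) * (1 - x) ^ k" by simp
  also have "\<dots> \<ge> (1 - x) * (1 - real k * x + (real k - 1) * x^2)"
    using step.IH assms by (intro mult_left_mono) auto
  finally have a: "(1 - x) * (1 - real k * x + (real k - 1) * x^2) \<le> (1 - x) ^ Suc k" .
  have "(1 - x) * (1 - real k * x + (real k - 1) * x^2)
        = 1 - real (Suc k) * x + (real (Suc k) - 1) * x^2 + (real k - 1) * x^2 * (1 - x)"
    by (simp add: algebra_simps power2_eq_square)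
  moreover have "0 \<le> (real k - 1) * x^2 * (1 - x)" using step.hyps assms by auto
  ultimately show ?case using a by linarith
qed

lemma phi_upper:
  fixes x :: real
  assumes "0 \<le> x" "x \<le> 1" "1 \<le> d"
  shows "1 - (1 - x) ^ d \<le> real d * x - (real d - 1) * x^2"
  using pow_lower[OF assms] by simp

lemma phi_lin:
  fixes x :: real
  assumes "0 \<le> x" "x \<le> 1" "1 \<le> d"
  shows "1 - (1 - x) ^ d \<le> real d * x"
proof -
  have "0 \<le> (real d - 1) * x^2" using assms by auto
  then show ?thesis using phi_upper[OF assms] by linarith
qed

lemma Q_int: "integrable (measure_pmf p)
   (\<lambda>r. if max m r = 0 then 0 else 1 - (1 - Q d p n (max m r - 1)) ^ d)"
proof (rule int_bdd[where B=1])
  fix r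
  show "\<bar>if max m r = 0 then 0 else 1 - (1 - Q d p n (max m r - 1)) ^ d\<bar> \<le> 1"
    using phi_bounds[of "Q d p n (max m r - 1)" d] Q_bounds[of d p n "max m r - 1"] by auto
qed

lemma Q_mono_m: "m \<le> m' \<Longrightarrow> Q d p n m \<le> Q d p n m'"
proof (induction n arbitrary: m m')
  case 0 then show ?case by simp
next
  case (Suc n)
  show ?case unfolding Q.simps
  proof (rule integral_mono[OF Q_int Q_int])
    fix r
    show "(if max m r = 0 then 0 else 1 - (1 - Q d p n (max m r - 1)) ^ d)
       \<le> (if max m' r = 0 then 0 else 1 - (1 - Q d p n (max m' r - 1)) ^ d)"
    proof (cases "max m r = 0")
      case True
      then show ?thesis
        using phi_bounds[of "Q d p n (max m' r - 1)" d] Q_bounds[of d p n "max m' r - 1"] by auto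
    next
      case False
      then have "max m' r \<noteq> 0" using Suc.prems by auto
      moreover have "Q d p n (max m r - 1) \<le> Q d p n (max m' r - 1)"
        using Suc.IH Suc.prems by auto
      ultimately have "1 - (1 - Q d p n (max m r - 1)) ^ d \<le> 1 - (1 - Q d p n (max m' r - 1)) ^ d"
        using phi_mono Q_bounds by blast
      then show ?thesis using False \<open>max m' r \<noteq> 0\<close> by (simp only: if_False if_not_P)

    qed
  qed
qed

lemma Q_Suc: "Q d p (Suc n) m = (\<integral>r. (if max m r = 0 then 0 else 1 - (1 - Q d p n (max m r - 1)) ^ d) \<partial>measure_pmf p)"
  by simp

lemma Q_mono_n_Suc: "Q d p (Suc n) m \<le> Q d p n m"
proof (induction n arbitrary: m)
  case 0 then show ?case using Q_bounds[of d p 1 m] by simp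
next
  case (Suc n)
  show ?case unfolding Q_Suc[of d p "Suc n" m] Q_Suc[of d p n m]
  proof (rule integral_mono[OF Q_int Q_int])
    fix r
    show "(if max m r = 0 then 0 else 1 - (1 - Q d p (Suc n) (max m r - 1)) ^ d)
       \<le> (if max m r = 0 then 0 else 1 - (1 - Q d p n (max m r - 1)) ^ d)"
    proof (cases "max m r = 0")
      case False
      have "1 - (1 - Q d p (Suc n) (max m r - 1)) ^ d \<le> 1 - (1 - Q d p n (max m r - 1)) ^ d"
        using Suc.IH phi_mono Q_bounds by blast
      then show ?thesis using False by (simp only: if_False if_not_P)
    qed simp
  qed
qed

lemma Q_mono_n: "n \<le> n' \<Longrightarrow> Q d p n' m \<le> Q d p n m"
proof (induction n' rule: dec_induct)
  case base then show ?case by simp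
next
  case (step k) then show ?case using Q_mono_n_Suc[of d p k m] by linarith
qed


lemma integral_ge_sum:
  fixes f :: "nat \<Rightarrow> real"
  assumes nn: "\<And>r. 0 \<le> f r" and bd: "\<And>r. f r \<le> B" and fin: "finite A"
  shows "(\<Sum>r\<in>A. pmf p r * f r) \<le> (\<integral>r. f r \<partial>measure_pmf p)"
proof -
  have B0: "0 \<le> B" using nn bd order_trans by blast
  have "(\<Sum>r\<in>A. pmf p r * f r) = (\<integral>r. f r * indicator A r \<partial>measure_pmf p)"
    by (subst integral_measure_pmf_real[where A=A]) (auto simp: fin indicator_def intro!: sum.cong)
  also have "\<dots> \<le> (\<integral>r. f r \<partial>measure_pmf p)"
  proof (rule integral_mono)
    show "integrable (measure_pmf p) (\<lambda>r. f r * indicator A r)"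
      by (rule int_bdd[where B=B]) (use nn bd B0 in \<open>auto simp: indicator_def\<close>)
    show "integrable (measure_pmf p) f"
      by (rule int_bdd[where B=B]) (use nn bd in auto)
    show "f r * indicator A r \<le> f r" for r using nn[of r] by (auto simp: indicator_def)
  qed
  finally show ?thesis .
qed

lemma bern:
  fixes c :: real
  assumes "0 \<le> c" "c \<le> 1"
  shows "real N * c - (real N * c)^2 \<le> 1 - (1 - c) ^ N"
proof -
  have b: "1 + real N * c \<le> (1 + c) ^ N" using Bernoulli_inequality[of c N] assms by simp
  have "(1 - c) ^ N * (1 + c) ^ N = (1 - c^2) ^ N" by (simp add: power_mult_distrib[symmetric] algebra_simps power2_eq_square)
  also have "\<dots> \<le> 1" using assms by (intro power_le_one) (auto simp: power2_eq_square mult_le_one)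
  finally have "(1 - c) ^ N * (1 + c) ^ N \<le> 1" .
  moreover have "(1 - c) ^ N * (1 + real N * c) \<le> (1 - c) ^ N * (1 + c) ^ N"
    using b assms by (intro mult_left_mono) auto
  ultimately have x: "(1 - c) ^ N * (1 + real N * c) \<le> 1" by linarith
  have "(1 - real N * c + (real N * c)^2) * (1 + real N * c) = 1 + (real N * c)^3"
    by (simp add: algebra_simps power2_eq_square power3_eq_cube)
  also have "\<dots> \<ge> 1" using assms by simp
  finally have y: "1 \<le> (1 - real N * c + (real N * c)^2) * (1 + real N * c)" .
  have pos: "0 < 1 + real N * c" using assms by (simp add: add_pos_nonneg)
  have "(1 - c) ^ N \<le> 1 - real N * c + (real N * c)^2"
    using x y pos by (smt (verit) mult_right_mono_neg mult_le_cancel_right)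
  then show ?thesis by simp
qed

lemma lower_bound:
  assumes c: "0 < c" "c \<le> 1" and d1: "1 \<le> d"
  assumes F: "c \<le> (\<integral>r. (if r = 0 then 0 else 1 - (1 - c) ^ (d ^ r)) \<partial>measure_pmf p)"
  shows "1 - (1 - c) ^ (d ^ j) \<le> Q d p n j"
proof (induction n arbitrary: j)
  case 0
  have "0 \<le> (1 - c) ^ (d ^ j)" using c by simp
  then show ?case by simp
next
  case (Suc n)
  define g where "g = (\<lambda>r. if max j r = 0 then 0 else 1 - (1 - c) ^ (d ^ max j r))"
  have gint: "integrable (measure_pmf p) g"
  proof (rule int_bdd[where B=1])
    fix r show "\<bar>g r\<bar> \<le> 1" using phi_bounds[of c "d ^ max j r"] c by (auto simp: g_def)
  qed
  have "(\<integral>r. g r \<partial>measure_pmf p) \<le> Q d p (Suc n) j"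
    unfolding Q_Suc
  proof (rule integral_mono[OF gint Q_int])
    fix r
    show "g r \<le> (if max j r = 0 then 0 else 1 - (1 - Q d p n (max j r - 1)) ^ d)"
    proof (cases "max j r = 0")
      case True then show ?thesis by (simp add: g_def)
    next
      case False
      define k where "k = max j r - 1"
      have kk: "max j r = Suc k" using False by (cases "max j r") (simp_all add: k_def)
      have "1 - (1 - (1 - (1 - c) ^ (d ^ k))) ^ d \<le> 1 - (1 - Q d p n k) ^ d"
        by (rule phi_mono) (use Suc.IH[of k] Q_bounds in auto)
      moreover have "(1 - (1 - (1 - c) ^ (d ^ k))) ^ d = ((1 - c) ^ (d ^ k)) ^ d" by simp
      moreover have "((1 - c) ^ (d ^ k)) ^ d = (1 - c) ^ (d ^ Suc k)" by (metis power_Suc2 power_mult)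
      ultimately have "1 - (1 - c) ^ (d ^ max j r) \<le> 1 - (1 - Q d p n k) ^ d" using kk by (simp del: power_Suc)
      moreover have "g r = 1 - (1 - c) ^ (d ^ max j r)" by (simp only: g_def if_not_P[OF False])
      moreover have "(if max j r = 0 then 0 else 1 - (1 - Q d p n (max j r - 1)) ^ d) = 1 - (1 - Q d p n k) ^ d"
        by (simp only: k_def if_not_P[OF False])
      ultimately show ?thesis by simp
    qed
  qed
  moreover have "1 - (1 - c) ^ (d ^ j) \<le> (\<integral>r. g r \<partial>measure_pmf p)"
  proof (cases "j = 0")
    case True
    have "g = (\<lambda>r. if r = 0 then 0 else 1 - (1 - c) ^ (d ^ r))" using True by (auto simp: g_def)
    then show ?thesis using F True by simp
  next
    case False
    have "(\<integral>r. 1 - (1 - c) ^ (d ^ j) \<partial>measure_pmf p) \<le> (\<integral>r. g r \<partial>measure_pmf p)"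
    proof (rule integral_mono[OF _ gint])
      show "integrable (measure_pmf p) (\<lambda>r. 1 - (1 - c) ^ (d ^ j))" by simp
      fix r
      have dj: "d ^ j \<le> d ^ max j r" using d1 by (intro power_increasing) auto
      have "(1 - c) ^ (d ^ max j r) \<le> (1 - c) ^ (d ^ j)"
        using power_decreasing[OF dj, of "1 - c"] c by auto
      then show "1 - (1 - c) ^ (d ^ j) \<le> g r" using False by (simp add: g_def)
    qed
    then show ?thesis by simp
  qed
  ultimately show ?case by linarith
qed

lemma exists_c:
  fixes p :: "nat pmf"
  assumes d2: "2 \<le> d"
  assumes H: "(\<integral>\<^sup>+ k. ennreal (real d ^ k) \<partial>measure_pmf p) > ennreal (1 + pmf p 0)"
  shows "\<exists>c::real. 0 < c \<and> c \<le> 1 \<and> c \<le> (\<integral>r. (if r = 0 then 0 else 1 - (1 - c) ^ (d ^ r)) \<partial>measure_pmf p)"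
proof -
  have "(\<integral>\<^sup>+ k. ennreal (real d ^ k) \<partial>measure_pmf p)
        = (\<integral>\<^sup>+ k. ennreal (pmf p k) * ennreal (real d ^ k) \<partial>count_space UNIV)"
    by (rule nn_integral_measure_pmf)
  also have "\<dots> = (\<Sum>k. ennreal (pmf p k) * ennreal (real d ^ k))"
    by (rule nn_integral_count_space_nat)
  also have "\<dots> = (SUP N. \<Sum>k<N. ennreal (pmf p k) * ennreal (real d ^ k))"
    by (rule suminf_eq_SUP)
  finally have "ennreal (1 + pmf p 0) < (SUP N. \<Sum>k<N. ennreal (pmf p k) * ennreal (real d ^ k))"
    using H by simp
  then obtain N where N: "ennreal (1 + pmf p 0) < (\<Sum>k<N. ennreal (pmf p k) * ennreal (real d ^ k))"
    by (auto simp: less_SUP_iff)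
  have "(\<Sum>k<N. ennreal (pmf p k) * ennreal (real d ^ k)) = ennreal (\<Sum>k<N. pmf p k * real d ^ k)"
    by (simp add: ennreal_mult' sum_ennreal[symmetric])
  with N have "ennreal (1 + pmf p 0) < ennreal (\<Sum>k<N. pmf p k * real d ^ k)"
    by (simp only:)
  then have N': "1 + pmf p 0 < (\<Sum>k<N. pmf p k * real d ^ k)"
    by (subst (asm) ennreal_less_iff) auto
  then have "N \<noteq> 0" using pmf_nonneg[of p 0] by (cases N) auto
  then have "{..<N} = insert 0 {1..<N}" by auto
  then have "(\<Sum>k<N. pmf p k * real d ^ k) = pmf p 0 + (\<Sum>k\<in>{1..<N}. pmf p k * real d ^ k)"
    by simp
  with N' have S1: "1 < (\<Sum>k\<in>{1..<N}. pmf p k * real d ^ k)" (is "1 < ?S") by simp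
  define T where "T = (\<Sum>k\<in>{1..<N}. pmf p k * (real d ^ k)^2)"
  have ST: "?S \<le> T" unfolding T_def
  proof (rule sum_mono)
    fix k
    have "1 \<le> real d ^ k" using d2 by simp
    then have "real d ^ k * 1 \<le> real d ^ k * real d ^ k" by (intro mult_left_mono) auto
    then have "real d ^ k \<le> (real d ^ k)^2" by (simp add: power2_eq_square)
    then show "pmf p k * real d ^ k \<le> pmf p k * (real d ^ k)^2" by (intro mult_left_mono) auto
  qed
  define c where "c = (?S - 1) / T"
  have Tpos: "0 < T" using S1 ST by linarith
  have c0: "0 < c" using S1 Tpos by (simp add: c_def)
  have c1: "c \<le> 1" using ST Tpos by (simp add: c_def)
  have "(\<Sum>k\<in>{1..<N}. pmf p k * (1 - (1 - c) ^ (d ^ k)))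
        \<le> (\<integral>r. (if r = 0 then 0 else 1 - (1 - c) ^ (d ^ r)) \<partial>measure_pmf p)"
  proof -
    have "(\<Sum>k\<in>{1..<N}. pmf p k * (1 - (1 - c) ^ (d ^ k)))
        = (\<Sum>k\<in>{1..<N}. pmf p k * (if k = 0 then 0 else 1 - (1 - c) ^ (d ^ k)))"
      by (rule sum.cong) auto
    also have "\<dots> \<le> (\<integral>r. (if r = 0 then 0 else 1 - (1 - c) ^ (d ^ r)) \<partial>measure_pmf p)"
      by (rule integral_ge_sum[where B=1]) (use phi_bounds c0 c1 in auto)
    finally show ?thesis .
  qed
  moreover have "c \<le> (\<Sum>k\<in>{1..<N}. pmf p k * (1 - (1 - c) ^ (d ^ k)))"
  proof -
    have "(\<Sum>k\<in>{1..<N}. pmf p k * (real (d ^ k) * c - (real (d ^ k) * c)^2))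
          \<le> (\<Sum>k\<in>{1..<N}. pmf p k * (1 - (1 - c) ^ (d ^ k)))"
      by (intro sum_mono mult_left_mono bern) (use c0 c1 in auto)
    moreover have "(\<Sum>k\<in>{1..<N}. pmf p k * (real (d ^ k) * c - (real (d ^ k) * c)^2)) = ?S * c - T * c^2"
      unfolding T_def by (simp add: right_diff_distrib sum_subtractf sum_distrib_left power2_eq_square mult_ac)
    moreover have "?S * c - T * c^2 = c"
      using Tpos by (simp add: c_def power2_eq_square field_simps)
    ultimately show ?thesis by linarith
  qed
  ultimately have "c \<le> (\<integral>r. (if r = 0 then 0 else 1 - (1 - c) ^ (d ^ r)) \<partial>measure_pmf p)"
    by linarith
  with c0 c1 show ?thesis by (intro exI[where x=c] conjI)
qed


lemma Q_U:
  assumes d1: "1 \<le> d"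
  shows "Q d p (Suc n) (Suc m) \<le> Q d p (Suc n) 0 + real d * Q d p n m"
proof -
  let ?A = "\<lambda>r. if max (Suc m) r = 0 then 0 else 1 - (1 - Q d p n (max (Suc m) r - 1)) ^ d"
  let ?B = "\<lambda>r. if max 0 r = 0 then 0 else 1 - (1 - Q d p n (max 0 r - 1)) ^ d"
  have "(\<integral>r. ?A r \<partial>measure_pmf p) \<le> (\<integral>r. ?B r + real d * Q d p n m \<partial>measure_pmf p)"
  proof (rule integral_mono[OF Q_int])
    show "integrable (measure_pmf p) (\<lambda>r. ?B r + real d * Q d p n m)"
      by (rule Bochner_Integration.integrable_add[OF Q_int]) simp
    fix r
    have B0: "0 \<le> ?B r" using phi_bounds Q_bounds by simp
    show "?A r \<le> ?B r + real d * Q d p n m"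
    proof (cases "Suc m \<le> r")
      case True
      then have "max (Suc m) r = r" "max 0 r = r" by auto
      moreover have "0 \<le> real d * Q d p n m" using Q_bounds by simp
      ultimately show ?thesis by simp
    next
      case False
      then have "max (Suc m) r = Suc m" by auto
      then have "?A r = 1 - (1 - Q d p n m) ^ d" by simp
      also have "\<dots> \<le> real d * Q d p n m" using phi_lin Q_bounds d1 by blast
      finally show ?thesis using B0 by linarith
    qed
  qed
  also have "\<dots> = (\<integral>r. ?B r \<partial>measure_pmf p) + real d * Q d p n m"
    by (subst Bochner_Integration.integral_add[OF Q_int]) simp_all
  finally show ?thesis unfolding Q_Suc .
qed

lemma Q_U':
  assumes d1: "1 \<le> d"
  shows "m \<le> n \<Longrightarrow> Q d p n m \<le> (\<Sum>j\<le>m. real d ^ j) * Q d p (n - m) 0"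
proof (induction m arbitrary: n)
  case 0 then show ?case by simp
next
  case (Suc m)
  then obtain n' where n: "n = Suc n'" by (cases n) auto
  have mn: "m \<le> n'" using Suc.prems n by simp
  have "Q d p n (Suc m) \<le> Q d p n 0 + real d * Q d p n' m" unfolding n by (rule Q_U[OF d1])
  also have "\<dots> \<le> Q d p (n' - m) 0 + real d * ((\<Sum>j\<le>m. real d ^ j) * Q d p (n' - m) 0)"
  proof -
    have "Q d p n 0 \<le> Q d p (n' - m) 0" using n by (intro Q_mono_n) auto
    moreover have "Q d p n' m \<le> (\<Sum>j\<le>m. real d ^ j) * Q d p (n' - m) 0" using Suc.IH mn by blast
    ultimately show ?thesis using d1 by (intro add_mono mult_left_mono) auto
  qed
  also have "\<dots> = (\<Sum>j\<le>Suc m. real d ^ j) * Q d p (n - Suc m) 0"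
  proof -
    have "(\<Sum>j\<le>Suc m. real d ^ j) = 1 + real d * (\<Sum>j\<le>m. real d ^ j)"
      by (subst sum.atMost_Suc_shift) (simp add: sum_distrib_left)
    then show ?thesis using n by (simp add: algebra_simps)
  qed
  finally show ?case .
qed

lemma geom: "(real d - 1) * (\<Sum>j\<le>m. real d ^ j) = real d ^ Suc m - 1"
  by (induction m) (simp_all add: algebra_simps)

lemma sum_bound:
  fixes p :: "nat pmf"
  assumes d2: "2 \<le> d"
  assumes H: "(\<integral>\<^sup>+ k. ennreal (real d ^ k) \<partial>measure_pmf p) \<le> ennreal (2 - 1 / real d)"
  shows "(\<Sum>r\<in>{1..L}. pmf p r * (real d * (\<Sum>j\<le>r - 1. real d ^ j))) \<le> 1"
proof -
  define g where "g = (\<lambda>k. (if k \<in> {1..L} then real d ^ k - 1 else 0) :: real)"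
  have gnn: "0 \<le> g k" for k using d2 by (simp add: g_def)
  have gint: "integrable (measure_pmf p) g"
  proof (rule int_bdd[where B="real d ^ L"])
    fix k
    show "\<bar>g k\<bar> \<le> real d ^ L"
    proof (cases "k \<in> {1..L}")
      case True
      have "1 \<le> real d ^ k" using d2 by simp
      moreover have "real d ^ k \<le> real d ^ L" using True d2 by (intro power_increasing) auto
      ultimately show ?thesis using True by (simp add: g_def)
    next
      case False
      have "g k = 0" by (simp only: g_def if_not_P[OF False])
      then show ?thesis by simp
    qed
  qed
  have "ennreal (1 + (\<Sum>r\<in>{1..L}. g r * pmf p r)) = ennreal (\<integral>k. 1 + g k \<partial>measure_pmf p)"
  proof -
    have I: "(\<integral>k. g k \<partial>measure_pmf p) = (\<Sum>r\<in>{1..L}. g r * pmf p r)"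
      by (rule integral_measure_pmf_real) (auto simp: g_def split: if_splits)
    have "(\<integral>k. 1 + g k \<partial>measure_pmf p) = 1 + (\<integral>k. g k \<partial>measure_pmf p)"
      by (subst Bochner_Integration.integral_add) (use gint in auto)
    then show ?thesis using I by simp
  qed
  also have "\<dots> = (\<integral>\<^sup>+ k. ennreal (1 + g k) \<partial>measure_pmf p)"
    by (rule nn_integral_eq_integral[symmetric]) (use gint gnn in \<open>auto intro: add_nonneg_nonneg\<close>)
  also have "\<dots> \<le> (\<integral>\<^sup>+ k. ennreal (real d ^ k) \<partial>measure_pmf p)"
  proof (rule nn_integral_mono)
    fix k
    have "1 \<le> real d ^ k" using d2 by simp
    then have "1 + g k \<le> real d ^ k" by (simp add: g_def)
    then show "ennreal (1 + g k) \<le> ennreal (real d ^ k)" by (rule ennreal_leI)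
  qed
  also have "\<dots> \<le> ennreal (2 - 1 / real d)" by (rule H)
  finally have "1 + (\<Sum>r\<in>{1..L}. g r * pmf p r) \<le> 2 - 1 / real d"
    using d2 by (subst (asm) ennreal_le_iff) (auto simp: field_simps)
  then have S: "(\<Sum>r\<in>{1..L}. pmf p r * (real d ^ r - 1)) \<le> 1 - 1 / real d"
    by (simp add: g_def mult.commute)
  have "(real d - 1) * (\<Sum>r\<in>{1..L}. pmf p r * (real d * (\<Sum>j\<le>r - 1. real d ^ j)))
      = (\<Sum>r\<in>{1..L}. real d * (pmf p r * (real d ^ r - 1)))"
  proof -
    have "(real d - 1) * (pmf p r * (real d * (\<Sum>j\<le>r - 1. real d ^ j))) = real d * (pmf p r * (real d ^ r - 1))"
      if "r \<in> {1..L}" for r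
    proof -
      have "Suc (r - 1) = r" using that by auto
      then have eq: "(real d - 1) * (\<Sum>j\<le>r - 1. real d ^ j) = real d ^ r - 1" using geom[of d "r - 1"] by simp
      have "(real d - 1) * (pmf p r * (real d * (\<Sum>j\<le>r - 1. real d ^ j)))
          = pmf p r * real d * ((real d - 1) * (\<Sum>j\<le>r - 1. real d ^ j))" by (simp add: algebra_simps)
      also have "\<dots> = pmf p r * real d * (real d ^ r - 1)" by (simp only: eq)
      finally show ?thesis by (simp add: algebra_simps)
    qed
    then show ?thesis by (simp add: sum_distrib_left)
  qed
  also have "\<dots> = real d * (\<Sum>r\<in>{1..L}. pmf p r * (real d ^ r - 1))" by (simp add: sum_distrib_left)
  also have "\<dots> \<le> real d * (1 - 1 / real d)" using S d2 by (intro mult_left_mono) auto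
  also have "\<dots> = real d - 1" using d2 by (simp add: field_simps)
  finally show ?thesis using d2 by simp
qed


lemma tail_lim: fixes p :: "nat pmf" shows "(\<lambda>L. measure (measure_pmf p) {L<..}) \<longlonglongrightarrow> 0"
proof -
  have "(\<lambda>L. measure (measure_pmf p) {L<..}) \<longlonglongrightarrow> measure (measure_pmf p) (\<Inter>L. {L<..})"
    by (rule measure_pmf.finite_Lim_measure_decseq) (auto simp: decseq_def)
  moreover have "(\<Inter>L::nat. {L<..}) = {}" by auto
  ultimately show ?thesis by simp
qed

lemma total: fixes p :: "nat pmf" shows "pmf p 0 + (\<Sum>r\<in>{1..L}. pmf p r) + measure (measure_pmf p) {L<..} = 1"
proof -
  have "UNIV - {..L} = {L<..}" by (auto simp: not_le)
  then have "measure (measure_pmf p) {L<..} = 1 - measure (measure_pmf p) {..L}"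
    using prob_compl_pmf[of p "{..L}"] by simp
  moreover have "measure (measure_pmf p) {..L} = (\<Sum>r\<le>L. pmf p r)"
    by (rule measure_measure_pmf_finite) simp
  moreover have "{..L} = insert 0 {1..L}" by auto
  ultimately show ?thesis by simp
qed

lemma step_bound:
  fixes p :: "nat pmf"
  assumes d2: "2 \<le> d"
  assumes H: "(\<integral>\<^sup>+ k. ennreal (real d ^ k) \<partial>measure_pmf p) \<le> ennreal (2 - 1 / real d)"
  assumes eps: "0 < \<epsilon>" and all: "\<forall>n. \<epsilon> \<le> Q d p n 0"
  assumes L1: "1 \<le> L" and Ln: "L \<le> Suc n"
  shows "Q d p (Suc n) 0 \<le> Q d p (Suc n - L) 0 - (real d - 1) * \<epsilon>^2 * (\<Sum>r\<in>{1..L}. pmf p r)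
           + measure (measure_pmf p) {L<..}"
proof -
  define a where "a = Q d p (Suc n - L) 0"
  define V where "V = (\<lambda>r. \<Sum>j\<le>r - 1. real d ^ j)"
  define h1 where "h1 = (\<lambda>r. if r \<in> {1..L} then real d * V r * a - (real d - 1) * \<epsilon>^2 else 0)"
  define h where "h = (\<lambda>r. h1 r + indicator {L<..} r)"
  have a01: "0 \<le> a" "a \<le> 1" using Q_bounds by (auto simp: a_def)
  have d1: "1 \<le> d" using d2 by simp
  have h1int: "integrable (measure_pmf p) h1"
  proof (rule int_bdd[where B="\<Sum>r\<in>{1..L}. \<bar>h1 r\<bar>"])
    fix r show "\<bar>h1 r\<bar> \<le> (\<Sum>r\<in>{1..L}. \<bar>h1 r\<bar>)"
    proof (cases "r \<in> {1..L}")
      case True then show ?thesis by (intro member_le_sum) auto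
    next
      case False
      have "h1 r = 0" by (simp only: h1_def if_not_P[OF False])
      then show ?thesis by (simp add: sum_nonneg)
    qed
  qed
  have hint: "integrable (measure_pmf p) h"
    unfolding h_def by (intro Bochner_Integration.integrable_add h1int) (simp add: int_bdd[where B=1])
  have "Q d p (Suc n) 0 \<le> (\<integral>r. h r \<partial>measure_pmf p)"
    unfolding Q_Suc
  proof (rule integral_mono[OF Q_int hint])
    fix r
    let ?B = "if max 0 r = 0 then 0 else 1 - (1 - Q d p n (max 0 r - 1)) ^ d"
    show "?B \<le> h r"
    proof (cases "r = 0")
      case True then show ?thesis by (simp add: h_def h1_def)
    next
      case r0: False
      define x where "x = Q d p n (r - 1)"
      have x01: "0 \<le> x" "x \<le> 1" using Q_bounds by (auto simp: x_def)
      have Bx: "?B = 1 - (1 - x) ^ d" using r0 by (simp add: x_def)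
      show ?thesis
      proof (cases "r \<le> L")
        case True
        then have rin: "r \<in> {1..L}" using r0 by auto
        have "1 - (1 - x) ^ d \<le> real d * x - (real d - 1) * x^2"
          by (rule phi_upper[OF x01 d1])
        also have "\<dots> \<le> real d * (V r * a) - (real d - 1) * \<epsilon>^2"
        proof -
          have "x \<le> (\<Sum>j\<le>r - 1. real d ^ j) * Q d p (n - (r - 1)) 0"
            unfolding x_def by (rule Q_U'[OF d1]) (use True Ln in auto)
          also have "\<dots> \<le> V r * a"
            unfolding V_def a_def
            by (intro mult_left_mono Q_mono_n sum_nonneg) (use True Ln r0 in auto)
          finally have xa: "x \<le> V r * a" .
          have "\<epsilon> \<le> Q d p n 0" using all by blast
          also have "\<dots> \<le> x" unfolding x_def by (rule Q_mono_m) simp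
          finally have "\<epsilon> \<le> x" .
          then have "\<epsilon>^2 \<le> x^2" using eps by (intro power_mono) auto
          then have "(real d - 1) * \<epsilon>^2 \<le> (real d - 1) * x^2" using d1 by (intro mult_left_mono) auto
          moreover have "real d * x \<le> real d * (V r * a)" using xa by (intro mult_left_mono) auto
          ultimately show ?thesis by linarith
        qed
        also have "\<dots> = h r" using rin by (simp add: h_def h1_def)
        finally show ?thesis using Bx by simp
      next
        case False
        then have "r \<notin> {1..L}" "r \<in> {L<..}" by auto
        then have "h r = 1" by (simp add: h_def h1_def)
        then show ?thesis using Bx phi_bounds[OF x01] by simp
      qed
    qed
  qed
  also have "(\<integral>r. h r \<partial>measure_pmf p) = (\<integral>r. h1 r \<partial>measure_pmf p) + measure (measure_pmf p) {L<..}"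
    unfolding h_def by (subst Bochner_Integration.integral_add) (auto intro: h1int int_bdd[where B=1])
  also have "(\<integral>r. h1 r \<partial>measure_pmf p) = (\<Sum>r\<in>{1..L}. h1 r * pmf p r)"
    by (rule integral_measure_pmf_real) (auto simp: h1_def split: if_splits)
  also have "\<dots> = a * (\<Sum>r\<in>{1..L}. pmf p r * (real d * V r)) - (real d - 1) * \<epsilon>^2 * (\<Sum>r\<in>{1..L}. pmf p r)"
    by (simp add: h1_def sum_distrib_left sum_subtractf sum.distrib algebra_simps)
  also have "\<dots> \<le> a - (real d - 1) * \<epsilon>^2 * (\<Sum>r\<in>{1..L}. pmf p r)"
  proof -
    have "(\<Sum>r\<in>{1..L}. pmf p r * (real d * V r)) \<le> 1"
      unfolding V_def by (rule sum_bound[OF d2 H])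
    then have "a * (\<Sum>r\<in>{1..L}. pmf p r * (real d * V r)) \<le> a * 1" using a01 by (intro mult_left_mono) auto
    then show ?thesis by simp
  qed
  finally show ?thesis unfolding a_def by simp
qed

lemma Q_small:
  fixes p :: "nat pmf"
  assumes d2: "2 \<le> d" and p0: "pmf p 0 < 1"
  assumes H: "(\<integral>\<^sup>+ k. ennreal (real d ^ k) \<partial>measure_pmf p) \<le> ennreal (2 - 1 / real d)"
  assumes eps: "0 < \<epsilon>"
  shows "\<exists>n. Q d p n 0 < \<epsilon>"
proof (rule ccontr)
  assume "\<not> (\<exists>n. Q d p n 0 < \<epsilon>)"
  then have all: "\<forall>n. \<epsilon> \<le> Q d p n 0" by (auto simp: not_less)
  define \<kappa> where "\<kappa> = (real d - 1) * \<epsilon>^2 * (1 - pmf p 0) / 4"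
  have kpos: "0 < \<kappa>" using d2 eps p0 by (simp add: \<kappa>_def)
  have m0: "0 < min ((1 - pmf p 0) / 2) \<kappa>" using kpos p0 by simp
  have "eventually (\<lambda>L. measure (measure_pmf p) {L<..} < min ((1 - pmf p 0) / 2) \<kappa>) sequentially"
    by (rule order_tendstoD(2)[OF tail_lim m0])
  then obtain L0 where L0: "\<And>L. L0 \<le> L \<Longrightarrow> measure (measure_pmf p) {L<..} < min ((1 - pmf p 0) / 2) \<kappa>"
    by (auto simp: eventually_sequentially)
  define L where "L = max 1 L0"
  have L1: "1 \<le> L" by (simp add: L_def)
  define t where "t = measure (measure_pmf p) {L<..}"
  have t1: "t < (1 - pmf p 0) / 2" and t2: "t < \<kappa>" using L0[of L] by (auto simp: L_def t_def)
  define P1 where "P1 = (\<Sum>r\<in>{1..L}. pmf p r)"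
  have P1: "P1 = 1 - pmf p 0 - t" using total[of p L] by (simp add: P1_def t_def)
  have "2 * \<kappa> \<le> (real d - 1) * \<epsilon>^2 * P1"
  proof -
    have "(1 - pmf p 0) / 2 \<le> P1" using P1 t1 by simp
    moreover have "0 \<le> (real d - 1) * \<epsilon>^2" using d2 by simp
    ultimately have "(real d - 1) * \<epsilon>^2 * ((1 - pmf p 0) / 2) \<le> (real d - 1) * \<epsilon>^2 * P1"
      by (intro mult_left_mono) auto
    then show ?thesis by (simp add: \<kappa>_def mult_ac)
  qed
  then have step: "Q d p (Suc n) 0 \<le> Q d p (Suc n - L) 0 - \<kappa>" if "L \<le> Suc n" for n
    using step_bound[OF d2 H eps all L1 that] t2 by (simp add: P1_def t_def)
  have iter: "Q d p (L + k * L) 0 \<le> 1 - real k * \<kappa>" for k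
  proof (induction k)
    case 0 then show ?case using Q_bounds[of d p L 0] by simp
  next
    case (Suc k)
    define n where "n = L + Suc k * L - 1"
    have n1: "Suc n = L + Suc k * L" using L1 by (simp add: n_def)
    have "L \<le> Suc n" using n1 by simp
    then have "Q d p (Suc n) 0 \<le> Q d p (Suc n - L) 0 - \<kappa>" by (rule step)
    moreover have "Suc n - L = L + k * L" using n1 by simp
    ultimately show ?case using Suc.IH n1 by (simp add: algebra_simps)
  qed
  obtain k where k: "1 < real k * \<kappa>" using ex_less_of_nat_mult[OF kpos] by blast
  have "Q d p (L + k * L) 0 < 0" using iter[of k] k by simp
  moreover have "\<epsilon> \<le> Q d p (L + k * L) 0" using all by blast
  ultimately show False using eps by simp
qed


theorem theorem1:
  fixes d :: nat and p :: "nat pmf"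
  assumes "d \<ge> 2" and "0 < pmf p 0" and "pmf p 0 < 1"
  shows "((\<integral>\<^sup>+ k. ennreal (real d ^ k) \<partial>measure_pmf p) > ennreal (1 + pmf p 0)
            \<longrightarrow> survival d p \<in> sets (cone_space d p)
                \<and> measure (cone_space d p) (survival d p) > 0)
       \<and> ((\<integral>\<^sup>+ k. ennreal (real d ^ k) \<partial>measure_pmf p) \<le> ennreal (2 - 1 / real d)
            \<longrightarrow> survival d p \<in> sets (cone_space d p)
                \<and> measure (cone_space d p) (survival d p) = 0)"
proof (intro conjI impI)
  assume H: "(\<integral>\<^sup>+ k. ennreal (real d ^ k) \<partial>measure_pmf p) > ennreal (1 + pmf p 0)"
  show "survival d p \<in> sets (cone_space d p)" by (rule survival_sets)
  obtain c :: real where c: "0 < c" "c \<le> 1"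
    "c \<le> (\<integral>r. (if r = 0 then 0 else 1 - (1 - c) ^ (d ^ r)) \<partial>measure_pmf p)"
    using exists_c[OF assms(1) H] by blast
  have "\<forall>n. c \<le> Q d p n 0"
  proof
    fix n
    have "1 - (1 - c) ^ (d ^ 0) \<le> Q d p n 0"
      by (rule lower_bound[OF c(1,2) _ c(3)]) (use assms(1) in simp)
    then show "c \<le> Q d p n 0" by simp
  qed
  then have "c \<le> measure (cone_space d p) (survival d p)"
    by (intro LIMSEQ_le_const[OF survival_lim]) auto
  then show "measure (cone_space d p) (survival d p) > 0" using c(1) by linarith
next
  assume H: "(\<integral>\<^sup>+ k. ennreal (real d ^ k) \<partial>measure_pmf p) \<le> ennreal (2 - 1 / real d)"
  show "survival d p \<in> sets (cone_space d p)" by (rule survival_sets)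
  show "measure (cone_space d p) (survival d p) = 0"
  proof (rule ccontr)
    assume ne: "measure (cone_space d p) (survival d p) \<noteq> 0"
    have pos: "0 < measure (cone_space d p) (survival d p)"
      using ne measure_nonneg[of "cone_space d p" "survival d p"] by linarith
    obtain n where "Q d p n 0 < measure (cone_space d p) (survival d p)"
      using Q_small[OF assms(1) assms(3) H pos] by blast
    then show False using survival_le[of d p n] by linarith
  qed
qed

end
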